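(* Work in units with $8\pi G=1$, $c=1$, metric signature $(+,-,-,-)$. Let $\rho(z)$, $p(z)$, $\delta p(z)$ be real functions defined on a neighbourhood of $z=0$ and let $z_1<z_2$ be real constants. Define $$\phi(z)=\int_0^z dw\,\frac{w-z_2}{w-z_1}\,\frac{p(w)}{(w-z_1)\,(\rho(w)-p(w))+(z_2-z_1)\,(\rho(w)+7p(w)-4\,\delta p(w))},$$ and assume that $\phi'$ is continuous and nonzero on a neighbourhood of $z=0$ (so in particular $p\neq 0$ near $z=0$), and that $z_1\,p_0<0$, where $p_0=p(0)$. On a neighbourhood of $z=0$ consider, in coordinates $(t,x,y,z)$, the metric $$ds^2=e^{2\phi}\,dt^2-e^{4(z_2-z_1)\int_0^z dw\,\frac{\phi'(w)}{w-z_2}}\,(dx^2+dy^2)-\frac{4(z_2-z_1)(z-z_1)}{(z-z_2)^2}\,\frac{(\phi')^2}{p}\,dz^2,$$ and the energy-momentum tensor $(T^\mu{}_\nu)=\mathrm{diag}\{\rho,\,-p_{\parallel},\,-p_{\parallel},\,-p\}$ with $p_{\parallel}=p-\delta p$. Suppose that $\rho,p,\delta p$ satisfy $$\frac{dp}{dz}=-\left(\frac{(z-z_2)(\rho+p)+4(z_2-z_1)\,\delta p}{(z-z_1)(\rho-p)+(z_2-z_1)(\rho+7p-4\,\delta p)}\right)\frac{p}{z-z_1}$$ (equivalently, $\nabla_\mu T^\mu{}_\nu=0$ for this metric). Then the Einstein equations $R^\mu{}_\nu-\tfrac12 R\,\delta^\mu{}_\nu=T^\mu{}_\nu$ hold on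 a neighbourhood of $z=0$.
   Context: Curvature sign conventions: Christoffel symbols of the Levi-Civita connection $\Gamma^\lambda_{\mu\nu}$; the Ricci tensor is $R_{\mu\nu}=\partial_\lambda\Gamma^\lambda_{\mu\nu}-\partial_\nu\Gamma^\lambda_{\mu\lambda}+\Gamma^\lambda_{\mu\nu}\Gamma^\sigma_{\lambda\sigma}-\Gamma^\sigma_{\mu\lambda}\Gamma^\lambda_{\nu\sigma}$ (Landau–Lifshitz conventions), $R^\mu{}_\nu=g^{\mu\alpha}R_{\alpha\nu}$, $R=R^\mu{}_\mu$. Here $\rho$ is the energy density, $p$ the pressure orthogonal to the planes of symmetry, $p_\parallel$ the pressure parallel to them, and $\delta p=p-p_\parallel$ the pressure difference. Note that $-g_{zz}>0$ near $z=0$ because $z_1p_0<0$ and $z_2>z_1$. *)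

theory Defs
  imports "HOL-Analysis.Analysis"
begin

text \<open>Coordinates (t,x,y,z) are indexed by the four elements 0,1,2,3 of the type 4.
  A metric is a function from spacetime points (real^4) to 4x4 matrices g_{mu nu}.\<close>

definition pd :: "(real^4 \<Rightarrow> real) \<Rightarrow> 4 \<Rightarrow> real^4 \<Rightarrow> real" where
  "pd f k X = deriv (\<lambda>s. f (X + s *\<^sub>R axis k 1)) 0"

definition christoffel :: "(real^4 \<Rightarrow> real^4^4) \<Rightarrow> 4 \<Rightarrow> 4 \<Rightarrow> 4 \<Rightarrow> real^4 \<Rightarrow> real" where
  "christoffel g l m n X = (1/2) * (\<Sum>s\<in>UNIV. matrix_inv (g X) $ l $ s *
      (pd (\<lambda>Y. g Y $ s $ n) m X + pd (\<lambda>Y. g Y $ s $ m) n X - pd (\<lambda>Y. g Y $ m $ n) s X))"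

text \<open>Ricci tensor, Landau-Lifshitz convention.\<close>
definition ricci :: "(real^4 \<Rightarrow> real^4^4) \<Rightarrow> 4 \<Rightarrow> 4 \<Rightarrow> real^4 \<Rightarrow> real" where
  "ricci g m n X =
     (\<Sum>l\<in>UNIV. pd (christoffel g l m n) l X)
   - (\<Sum>l\<in>UNIV. pd (christoffel g l m l) n X)
   + (\<Sum>l\<in>UNIV. \<Sum>s\<in>UNIV. christoffel g l m n X * christoffel g s l s X)
   - (\<Sum>l\<in>UNIV. \<Sum>s\<in>UNIV. christoffel g s m l X * christoffel g l n s X)"

definition mixed_ricci :: "(real^4 \<Rightarrow> real^4^4) \<Rightarrow> 4 \<Rightarrow> 4 \<Rightarrow> real^4 \<Rightarrow> real" where
  "mixed_ricci g m n X = (\<Sum>a\<in>UNIV. matrix_inv (g X) $ m $ a * ricci g a n X)"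

definition scalar_curv :: "(real^4 \<Rightarrow> real^4^4) \<Rightarrow> real^4 \<Rightarrow> real" where
  "scalar_curv g X = (\<Sum>m\<in>UNIV. mixed_ricci g m m X)"

definition einstein_mixed :: "(real^4 \<Rightarrow> real^4^4) \<Rightarrow> 4 \<Rightarrow> 4 \<Rightarrow> real^4 \<Rightarrow> real" where
  "einstein_mixed g m n X = mixed_ricci g m n X - (1/2) * scalar_curv g X * (if m = n then 1 else 0)"

definition sint :: "real \<Rightarrow> real \<Rightarrow> (real \<Rightarrow> real) \<Rightarrow> real" where
  "sint a b f = (if a \<le> b then integral {a..b} f else - integral {b..a} f)"

definition phid :: "(real \<Rightarrow> real) \<Rightarrow> (real \<Rightarrow> real) \<Rightarrow> (real \<Rightarrow> real) \<Rightarrow> real \<Rightarrow> real \<Rightarrow> real \<Rightarrow> real" where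
  "phid rho p dp z1 z2 w = (w - z2) / (w - z1) * p w /
      ((w - z1) * (rho w - p w) + (z2 - z1) * (rho w + 7 * p w - 4 * dp w))"

definition phi :: "(real \<Rightarrow> real) \<Rightarrow> (real \<Rightarrow> real) \<Rightarrow> (real \<Rightarrow> real) \<Rightarrow> real \<Rightarrow> real \<Rightarrow> real \<Rightarrow> real" where
  "phi rho p dp z1 z2 z = sint 0 z (phid rho p dp z1 z2)"

definition the_metric :: "(real \<Rightarrow> real) \<Rightarrow> (real \<Rightarrow> real) \<Rightarrow> (real \<Rightarrow> real) \<Rightarrow> real \<Rightarrow> real \<Rightarrow> real^4 \<Rightarrow> real^4^4" where
  "the_metric rho p dp z1 z2 X = (let z = X $ 3 in
     (\<chi> i j. if i \<noteq> j then 0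
       else if i = 0 then exp (2 * phi rho p dp z1 z2 z)
       else if i = 3 then - (4 * (z2 - z1) * (z - z1) / (z - z2)^2 * (phid rho p dp z1 z2 z)^2 / p z)
       else - exp (4 * (z2 - z1) * sint 0 z (\<lambda>w. phid rho p dp z1 z2 w / (w - z2)))))"

definition the_emt :: "(real \<Rightarrow> real) \<Rightarrow> (real \<Rightarrow> real) \<Rightarrow> (real \<Rightarrow> real) \<Rightarrow> real^4 \<Rightarrow> real^4^4" where
  "the_emt rho p dp X = (let z = X $ 3 in
     (\<chi> i j. if i \<noteq> j then 0
       else if i = 0 then rho z
       else if i = 3 then - p z
       else - (p z - dp z)))"

end

theory Submission
  imports Defs
begin


definition dg :: "(4 \<Rightarrow> real \<Rightarrow> real) \<Rightarrow> real \<Rightarrow> real^4^4" where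
  "dg E z = (\<chi> i j. if i = j then E i z else 0)"

lemma four_neq[simp]: "(0::4) \<noteq> 1" "(0::4) \<noteq> 2" "(0::4) \<noteq> 3" "(1::4) \<noteq> 2" "(1::4) \<noteq> 3" "(2::4) \<noteq> 3"
  "(1::4) \<noteq> 0" "(2::4) \<noteq> 0" "(3::4) \<noteq> 0" "(2::4) \<noteq> 1" "(3::4) \<noteq> 1" "(3::4) \<noteq> 2"
  by simp_all

lemma sum4: "sum f (UNIV::4 set) = f 0 + f 1 + f 2 + f 3"
proof -
  have "f (4::4) = f 0" by (rule arg_cong[where f=f]) simp
  then show ?thesis using sum_4[of f] by (simp add: ac_simps)
qed

lemma matrix_inv_eq:
  fixes A B :: "real^'n^'n"
  assumes "A ** B = mat 1" "B ** A = mat 1"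
  shows "matrix_inv A = B"
proof -
  have "\<exists>A'. A ** A' = mat 1 \<and> A' ** A = mat 1" using assms by blast
  hence h: "A ** matrix_inv A = mat 1 \<and> matrix_inv A ** A = mat 1"
    unfolding matrix_inv_def by (rule someI_ex)
  have "matrix_inv A = matrix_inv A ** (A ** B)" by (simp add: assms matrix_mul_rid)
  also have "\<dots> = (matrix_inv A ** A) ** B" by (simp add: matrix_mul_assoc)
  also have "\<dots> = B" using h by (simp add: matrix_mul_lid)
  finally show ?thesis .
qed

lemma dg_inv: assumes "\<And>i. E i z \<noteq> 0"
  shows "matrix_inv (dg E z) = dg (\<lambda>i z. 1 / E i z) z"
  apply (rule matrix_inv_eq)
  using assms by (auto simp: dg_def matrix_matrix_mult_def mat_def vec_eq_iff if_distrib[of "\<lambda>x. x * _"] sum.delta cong: if_cong)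

lemma pd_z: "pd (\<lambda>Y. f (Y $ 3)) k X = (if k = 3 then deriv f (X $ 3) else 0)"
proof (cases "k = 3")
  case True
  have "(\<lambda>s. f ((X + s *\<^sub>R axis k 1) $ 3)) = (\<lambda>s. f (s + X $ 3))"
    using True by (auto simp: axis_def add.commute)
  moreover have "deriv (\<lambda>s. f (s + X $ 3)) 0 = deriv f (X $ 3)"
    unfolding deriv_def using DERIV_shift[of f _ 0 "X $ 3"] by simp
  ultimately show ?thesis using True by (simp add: pd_def)
next
  case False
  have "(\<lambda>s. f ((X + s *\<^sub>R axis k 1) $ 3)) = (\<lambda>s. f (X $ 3))"
    using False by (auto simp: axis_def)
  then show ?thesis using False by (simp add: pd_def)
qed

lemma sint_deriv:
  fixes f :: "real \<Rightarrow> real"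
  assumes cf: "continuous_on {a<..<b} f" and "a < 0" "0 < b" "a < x" "x < b"
  shows "((\<lambda>z. sint 0 z f) has_real_derivative f x) (at x)"
proof -
  define c where "c = (a + min x 0) / 2"
  define d where "d = (b + max x 0) / 2"
  have cd: "a < c" "c < x" "c < 0" "x < d" "0 < d" "d < b" using assms by (auto simp: c_def d_def)
  have cont: "continuous_on {c..d} f" using cf by (rule continuous_on_subset) (use cd in auto)
  have int: "f integrable_on {c..d}" using cont by (rule integrable_continuous_real)
  have d1: "((\<lambda>z. integral {c..z} f) has_real_derivative f x) (at x)"
    using integral_has_real_derivative[OF cont, of x] cd by (simp add: at_within_Icc_at)
  have d2: "((\<lambda>z. integral {c..z} f - integral {c..0} f) has_real_derivative f x) (at x)"
    using d1 by (auto intro!: derivative_eq_intros)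
  show ?thesis
  proof (rule has_field_derivative_transform_within_open[OF d2, of "{c<..<d}"])
    fix z assume z: "z \<in> {c<..<d}"
    show "integral {c..z} f - integral {c..0} f = sint 0 z f"
    proof (cases "0 \<le> z")
      case True
      have ii: "f integrable_on {c..z}" by (rule integrable_subinterval_real[OF int]) (use z in auto)
      have "integral {c..0} f + integral {0..z} f = integral {c..z} f"
        by (rule Henstock_Kurzweil_Integration.integral_combine[OF _ _ ii]) (use cd True in auto)
      then show ?thesis using True by (simp add: sint_def)
    next
      case False
      have ii: "f integrable_on {c..0}" by (rule integrable_subinterval_real[OF int]) (use cd in auto)
      have "integral {c..z} f + integral {z..0} f = integral {c..0} f"
        by (rule Henstock_Kurzweil_Integration.integral_combine[OF _ _ ii]) (use z False in auto)
      then show ?thesis using False by (simp add: sint_def)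
    qed
  qed (use cd in auto)
qed

lemma pd_dg: "pd (\<lambda>Y. dg E (Y $ 3) $ i $ j) k X = (if k = 3 then deriv (\<lambda>z. dg E z $ i $ j) (X $ 3) else 0)"
  using pd_z[of "\<lambda>z. dg E z $ i $ j"] by simp

definition C1 :: "(4 \<Rightarrow> real \<Rightarrow> real) \<Rightarrow> 4 \<Rightarrow> 4 \<Rightarrow> 4 \<Rightarrow> real \<Rightarrow> real" where
  "C1 E l m n z = (1/2) * (\<Sum>s\<in>UNIV. matrix_inv (dg E z) $ l $ s *
      ((if m = 3 then deriv (\<lambda>z. dg E z $ s $ n) z else 0) + (if n = 3 then deriv (\<lambda>z. dg E z $ s $ m) z else 0)
       - (if s = 3 then deriv (\<lambda>z. dg E z $ m $ n) z else 0)))"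

lemma chr_red: "christoffel (\<lambda>X. dg E (X $ 3)) l m n = (\<lambda>X. C1 E l m n (X $ 3))"
  by (rule ext) (simp add: christoffel_def C1_def pd_dg)

lemma pd_C1: "pd (\<lambda>Y. C1 E l m n (Y $ 3)) k X = (if k = 3 then deriv (C1 E l m n) (X $ 3) else 0)"
  using pd_z[of "C1 E l m n"] by simp

definition RI :: "(4 \<Rightarrow> real \<Rightarrow> real) \<Rightarrow> 4 \<Rightarrow> 4 \<Rightarrow> real \<Rightarrow> real" where
  "RI E m n z = (\<Sum>l\<in>UNIV. if l = 3 then deriv (C1 E l m n) z else 0)
     - (\<Sum>l\<in>UNIV. if n = 3 then deriv (C1 E l m l) z else 0)
     + (\<Sum>l\<in>UNIV. \<Sum>s\<in>UNIV. C1 E l m n z * C1 E s l s z)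
     - (\<Sum>l\<in>UNIV. \<Sum>s\<in>UNIV. C1 E s m l z * C1 E l n s z)"

lemma ricci_red: "ricci (\<lambda>X. dg E (X $ 3)) m n X = RI E m n (X $ 3)"
  by (simp add: ricci_def RI_def chr_red pd_C1 cong: if_cong)

definition EMz :: "(4 \<Rightarrow> real \<Rightarrow> real) \<Rightarrow> 4 \<Rightarrow> 4 \<Rightarrow> real \<Rightarrow> real" where
  "EMz E m n z = (\<Sum>a\<in>UNIV. matrix_inv (dg E z) $ m $ a * RI E a n z)
     - (1/2) * (\<Sum>k\<in>UNIV. \<Sum>a\<in>UNIV. matrix_inv (dg E z) $ k $ a * RI E a k z) * (if m = n then 1 else 0)"

lemma einstein_red: "einstein_mixed (\<lambda>X. dg E (X $ 3)) m n X = EMz E m n (X $ 3)"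
  by (simp add: einstein_mixed_def EMz_def mixed_ricci_def scalar_curv_def ricci_red)

definition CF :: "(4 \<Rightarrow> real \<Rightarrow> real) \<Rightarrow> 4 \<Rightarrow> 4 \<Rightarrow> 4 \<Rightarrow> real \<Rightarrow> real" where
  "CF E l m n z = (1/2) * (1 / E l z) * ((if m = 3 \<and> l = n then deriv (E n) z else 0)
      + (if n = 3 \<and> l = m then deriv (E m) z else 0) - (if l = 3 \<and> m = n then deriv (E m) z else 0))"

lemma deriv_dg: "deriv (\<lambda>z. dg E z $ i $ j) w = (if i = j then deriv (E i) w else 0)"
  by (cases "i = j") (simp_all add: dg_def)

lemma C1_loc: assumes "\<And>i. E i w \<noteq> 0" shows "C1 E l m n w = CF E l m n w"
  unfolding C1_def dg_inv[of E w, OF assms] deriv_dg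
  by (simp add: CF_def dg_def if_distrib[of "\<lambda>x. x * _"] sum.delta cong: if_cong)

definition RF :: "(4 \<Rightarrow> real \<Rightarrow> real) \<Rightarrow> 4 \<Rightarrow> 4 \<Rightarrow> real \<Rightarrow> real" where
  "RF E m n z = (\<Sum>l\<in>UNIV. if l = 3 then deriv (CF E l m n) z else 0)
     - (\<Sum>l\<in>UNIV. if n = 3 then deriv (CF E l m l) z else 0)
     + (\<Sum>l\<in>UNIV. \<Sum>s\<in>UNIV. CF E l m n z * CF E s l s z)
     - (\<Sum>l\<in>UNIV. \<Sum>s\<in>UNIV. CF E s m l z * CF E l n s z)"

lemma EMz_loc:
  assumes "open I" "z \<in> I" "\<And>w i. w \<in> I \<Longrightarrow> E i w \<noteq> 0"
  shows "EMz E m n z = (1 / E m z) * RF E m n z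
     - (1/2) * (\<Sum>k\<in>UNIV. (1 / E k z) * RF E k k z) * (if m = n then 1 else 0)"
proof -
  have dC: "deriv (C1 E l m n) z = deriv (CF E l m n) z" for l m n
  proof (rule deriv_cong_ev[OF _ refl])
    have "eventually (\<lambda>w. w \<in> I) (nhds z)" by (rule eventually_nhds_in_open[OF assms(1,2)])
    then show "\<forall>\<^sub>F x in nhds z. C1 E l m n x = CF E l m n x"
      by (rule eventually_mono) (use assms C1_loc in blast)
  qed
  have RI: "RI E m n z = RF E m n z" for m n
    unfolding RI_def RF_def dC using C1_loc[of E z] assms by simp
  have inv: "matrix_inv (dg E z) = dg (\<lambda>i z. 1 / E i z) z" by (rule dg_inv) (use assms in auto)
  show ?thesis unfolding EMz_def RI inv
    by (simp add: dg_inv dg_def if_distrib[of "\<lambda>x. x * _"] sum.delta cong: if_cong)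
qed

lemma CF_zero: "\<not> ((m = 3 \<and> l = n) \<or> (n = 3 \<and> l = m) \<or> (l = 3 \<and> m = n)) \<Longrightarrow> CF E l m n = (\<lambda>z. 0)"
  by (rule ext) (auto simp: CF_def)

lemma stepA0:
  fixes a b c cp f fa g z za zb v w :: real
  assumes nz: "v \<noteq> 0" "a \<noteq> 0" "b \<noteq> 0" "c \<noteq> 0"
    and z12: "zb = z - v" "za = z - v - w"
  shows "(((fa * a + f * (2 * f * a)) * c - f * a * cp) / (c)^2 + (a * (f * (g * (4 * zb - 4 * za))) / c + a * (cp * f) / (2 * (c * c))) - a * (f * f) / c) / a - ((b * (cp * (g * (4 * zb - 4 * za))) / (2 * (c * c)) + f * ((4 * zb - 4 * za) * g * b) / c - 2 * ((2 * za - 2 * zb) * (((fa * (z - zb) - f) * b / (z - zb)^2 + g * ((4 * zb - 4 * za) * g * b)) * c - g * b * cp)) / (c)^2) / b + (((fa * a + f * (2 * f * a)) * c - f * a * cp) / (c)^2 + (g * ((4 * zb - 4 * za) * (f * a)) / c + a * (cp * f) / (2 * (c * c))) - a * (f * f) / c) / a - (g * ((4 * zb - 4 * za) * cp) / (2 * c) + (f * cp / (2 * c) + (- (f * f) - g * (g * ((4 * zb - 4 * za) * (4 * zb - 4 * za))) / 2)) - fa - 2 * ((fa * (z - zb) - f) * (2 * zb - 2 * za)) / (z - zb)^2) / c) / 2 = (- 2 * (2 * w * ((fa * v - f) / v^2)) - 3 * (2 * w * g)^2 + 2 * (cp / (2 * c)) * (2 * w * g)) / c"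
  unfolding z12 using nz
  apply (simp add: field_simps)
  apply algebra?
  done

lemma stepA1:
  fixes a b c cp f fa g z za zb v w :: real
  assumes nz: "v \<noteq> 0" "a \<noteq> 0" "b \<noteq> 0" "c \<noteq> 0"
    and z12: "zb = z - v" "za = z - v - w"
  shows "- (((2 * za - 2 * zb) * (((fa * (z - zb) - f) * b / (z - zb)^2 + g * ((4 * zb - 4 * za) * g * b)) * c - g * b * cp) / (c)^2 + (- (b * (f * (g * (4 * zb - 4 * za))) / (2 * c)) - (4 * zb - 4 * za) * g * b * cp / (4 * (c * c)))) / b) - ((b * (cp * (g * (4 * zb - 4 * za))) / (2 * (c * c)) + f * ((4 * zb - 4 * za) * g * b) / c - 2 * ((2 * za - 2 * zb) * (((fa * (z - zb) - f) * b / (z - zb)^2 + g * ((4 * zb - 4 * za) * g * b)) * c - g * b * cp)) / (c)^2) / b + (((fa * a + f * (2 * f * a)) * c - f * a * cp) / (c)^2 + (g * ((4 * zb - 4 * za) * (f * a)) / c + a * (cp * f) / (2 * (c * c))) - a * (f * f) / c) / a - (g * ((4 * zb - 4 * za) * cp) / (2 * c) + (f * cp / (2 * c) + (- (f * f) - g * (g * ((4 * zb - 4 * za) * (4 * zb - 4 * za))) / 2)) - fa - 2 * ((fa * (z - zb) - f) * (2 * zb - 2 * za)) / (z - zb)^2) / c) / 2 = (- fa - (2 * w * ((fa * v - f) / v^2)) - (2 * w * g)^2 - (2 * w * g) * f - f^2 + (cp / (2 * c)) * (f + (2 * w * g))) / c"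
  unfolding z12 using nz
  apply (simp add: field_simps)
  apply algebra?
  done

lemma stepA2:
  fixes a b c cp f fa g z za zb v w :: real
  assumes nz: "v \<noteq> 0" "a \<noteq> 0" "b \<noteq> 0" "c \<noteq> 0"
    and z12: "zb = z - v" "za = z - v - w"
  shows "- (((2 * za - 2 * zb) * (((fa * (z - zb) - f) * b / (z - zb)^2 + g * ((4 * zb - 4 * za) * g * b)) * c - g * b * cp) / (c)^2 + (- (b * (f * (g * (4 * zb - 4 * za))) / (2 * c)) - (4 * zb - 4 * za) * g * b * cp / (4 * (c * c)))) / b) - ((b * (cp * (g * (4 * zb - 4 * za))) / (2 * (c * c)) + f * ((4 * zb - 4 * za) * g * b) / c - 2 * ((2 * za - 2 * zb) * (((fa * (z - zb) - f) * b / (z - zb)^2 + g * ((4 * zb - 4 * za) * g * b)) * c - g * b * cp)) / (c)^2) / b + (((fa * a + f * (2 * f * a)) * c - f * a * cp) / (c)^2 + (g * ((4 * zb - 4 * za) * (f * a)) / c + a * (cp * f) / (2 * (c * c))) - a * (f * f) / c) / a - (g * ((4 * zb - 4 * za) * cp) / (2 * c) + (f * cp / (2 * c) + (- (f * f) - g * (g * ((4 * zb - 4 * za) * (4 * zb - 4 * za))) / 2)) - fa - 2 * ((fa * (z - zb) - f) * (2 * zb - 2 * za)) / (z - zb)^2) / c) / 2 = (- fa - (2 * w * ((fa * v - f) / v^2)) - (2 * w * g)^2 - (2 * w * g) * f - f^2 + (cp / (2 * c)) * (f + (2 * w * g))) / c"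
  unfolding z12 using nz
  apply (simp add: field_simps)
  apply algebra?
  done

lemma stepA3:
  fixes a b c cp f fa g z za zb v w :: real
  assumes nz: "v \<noteq> 0" "a \<noteq> 0" "b \<noteq> 0" "c \<noteq> 0"
    and z12: "zb = z - v" "za = z - v - w"
  shows "- ((cp * (g * (4 * zb - 4 * za)) / (2 * c) + (cp * f / (2 * c) + (- (g * (g * ((4 * zb - 4 * za) * (4 * zb - 4 * za))) / 2) - f * f)) - fa - 2 * ((fa * (z - zb) - f) * (2 * zb - 2 * za)) / (z - zb)^2) / c) - ((b * (cp * (g * (4 * zb - 4 * za))) / (2 * (c * c)) + f * ((4 * zb - 4 * za) * g * b) / c - 2 * ((2 * za - 2 * zb) * (((fa * (z - zb) - f) * b / (z - zb)^2 + g * ((4 * zb - 4 * za) * g * b)) * c - g * b * cp)) / (c)^2) / b + (((fa * a + f * (2 * f * a)) * c - f * a * cp) / (c)^2 + (g * ((4 * zb - 4 * za) * (f * a)) / c + a * (cp * f) / (2 * (c * c))) - a * (f * f) / c) / a - (g * ((4 * zb - 4 * za) * cp) / (2 * c) + (f * cp / (2 * c) + (- (f * f) - g * (g * ((4 * zb - 4 * za) * (4 * zb - 4 * za))) / 2)) - fa - 2 * ((fa * (z - zb) - f) * (2 * zb - 2 * za)) / (z - zb)^2) / c) / 2 = - ((2 * w * g)^2 + 2 * (2 * w * g) * f) / c"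
  unfolding z12 using nz
  apply (simp add: field_simps)
  apply algebra?
  done


locale algctx =
  fixes c cp f f1 g pp P1 r d u v w :: real
  assumes nz: "u \<noteq> 0" "v \<noteq> 0" "w \<noteq> 0" "pp \<noteq> 0" "f \<noteq> 0"
    and gd: "g = f / v"
    and ud: "u = v + w"
    and cd: "c = 4 * w * u / v^2 * f^2 / pp"
    and cpd: "cp = c * (1 / u - 2 / v + 2 * f1 / f - P1 / pp)"
    and P1d: "P1 = - f * (r + pp + 4 * w * d / v)"
    and fd: "v * pp = u * f * (u * (r - pp) + w * (r + 7 * pp - 4 * d))"
begin

lemma c0: "c \<noteq> 0" using nz cd ud by auto

lemma cmul: "c * (v^2 * pp) = 4 * w * u * f^2" using nz unfolding cd by (simp add: field_simps)

lemma B2: "- ((2 * w * g)^2 + 2 * (2 * w * g) * f) / c = - pp"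
proof -
  have "(2 * w * g)^2 + 2 * (2 * w * g) * f = 4 * w * f^2 * u / v^2" unfolding gd ud using nz by (simp add: field_simps power2_eq_square)
  also have "\<dots> = pp * c" unfolding cd using nz by (simp add: field_simps)
  finally show ?thesis using c0 by simp
qed

lemma B0: "(- 2 * (2 * w * ((f1 * v - f) / v^2)) - 3 * (2 * w * g)^2 + 2 * (cp / (2 * c)) * (2 * w * g)) / c = r"
proof -
  have "- 2 * (2 * w * ((f1 * v - f) / v^2)) - 3 * (2 * w * g)^2 + 2 * (cp / (2 * c)) * (2 * w * g) = 2 * w * f/(u * v) - 2 * w * f * P1/(v * pp) - 12 * w^2 * f^2/v^2"
    unfolding cpd gd using nz c0 by (simp add: field_simps power2_eq_square)
  also have "\<dots> = 2 * w * f/(u * v) + 2 * w * f^2 * (r + pp + 4 * w * d / v)/(v * pp) - 12 * w^2 * f^2/v^2"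
    unfolding P1d using nz by (simp add: field_simps power2_eq_square)
  also have "\<dots> = (2 * w * f / (u * v^2 * pp)) * (v * pp + f * u * (v * (r + pp) + 4 * w * d) - 6 * w * f * u * pp)"
    using nz by (simp add: field_simps power2_eq_square)
  also have "v * pp + f * u * (v * (r + pp) + 4 * w * d) - 6 * w * f * u * pp = 2 * u^2 * f * r"
    unfolding fd ud by (simp add: algebra_simps power2_eq_square)
  also have "(2 * w * f / (u * v^2 * pp)) * (2 * u^2 * f * r) = r * c"
    unfolding cd using nz by (simp add: field_simps power2_eq_square)
  finally show ?thesis using c0 by simp
qed

lemma B1: "(- f1 - (2 * w * ((f1 * v - f) / v^2)) - (2 * w * g)^2 - (2 * w * g) * f - f^2 + (cp / (2 * c)) * (f + (2 * w * g))) / c = d - pp"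
proof -
  have "- f1 - (2 * w * ((f1 * v - f) / v^2)) - (2 * w * g)^2 - (2 * w * g) * f - f^2 + (cp / (2 * c)) * (f + (2 * w * g))
     = 2 * w * f/v^2 - (2 * w * f/v)^2 - (2 * w * f/v) * f - f^2 + (1/2) * (1/u - 2/v - P1/pp) * (f + 2 * w * f/v)"
    unfolding cpd gd using nz c0 by (simp add: field_simps power2_eq_square)
  also have "\<dots> = 2 * w * f/v^2 - (2 * w * f/v)^2 - (2 * w * f/v) * f - f^2 + (1/2) * (1/u - 2/v + f * (r + pp + 4 * w * d / v)/pp) * (f + 2 * w * f/v)"
    unfolding P1d using nz by (simp add: field_simps power2_eq_square)
  also have "\<dots> = (f / (2 * u * v^2 * pp)) * (4 * w * u * pp - 8 * w^2 * f * u * pp - 4 * w * f * v * u * pp - 2 * f * v^2 * u * pp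
      + (v * pp - 2 * u * pp + f * u * (v * (r + pp) + 4 * w * d)) * (v + 2 * w))"
    using nz by (simp add: field_simps power2_eq_square)
  also have "4 * w * u * pp - 8 * w^2 * f * u * pp - 4 * w * f * v * u * pp - 2 * f * v^2 * u * pp
      + (v * pp - 2 * u * pp + f * u * (v * (r + pp) + 4 * w * d)) * (v + 2 * w) = 4 * w * u * f * (d - pp) * 2 * u"
    using fd unfolding ud by algebra
  also have "(f / (2 * u * v^2 * pp)) * (4 * w * u * f * (d - pp) * 2 * u) = (d - pp) * c"
    unfolding cd using nz by (simp add: field_simps power2_eq_square)
  finally show ?thesis using c0 by simp
qed
end




lemma deriv_loc: "open I \<Longrightarrow> z \<in> I \<Longrightarrow> (\<And>w. w \<in> I \<Longrightarrow> F w = G w) \<Longrightarrow> (G has_real_derivative D) (at z) \<Longrightarrow> deriv F z = D"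
  by (metis (mono_tags, lifting) DERIV_imp_deriv has_field_derivative_transform_within_open)

theorem theorem1:
  fixes rho p dp :: "real \<Rightarrow> real" and z1 z2 \<delta> :: real
  assumes "z1 < z2" and "\<delta> > 0"
    and "\<forall>w\<in>{-\<delta><..<\<delta>}. rho differentiable (at w) \<and> dp differentiable (at w)"
    and "continuous_on {-\<delta><..<\<delta>} (phid rho p dp z1 z2)"
    and "\<forall>w\<in>{-\<delta><..<\<delta>}. phid rho p dp z1 z2 w \<noteq> 0"
    and "z1 * p 0 < 0"
    and "\<forall>w\<in>{-\<delta><..<\<delta>}. (p has_real_derivative
           (- (((w - z2) * (rho w + p w) + 4 * (z2 - z1) * dp w) /
               ((w - z1) * (rho w - p w) + (z2 - z1) * (rho w + 7 * p w - 4 * dp w)))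
            * p w / (w - z1))) (at w)"
  shows "\<exists>\<epsilon>>0. \<forall>X::real^4. \<bar>X $ 3\<bar> < \<epsilon> \<longrightarrow>
           (\<forall>m n. einstein_mixed (the_metric rho p dp z1 z2) m n X = the_emt rho p dp X $ m $ n)"
proof -
  define f where "f = phid rho p dp z1 z2"
  define Den where "Den w = (w - z1) * (rho w - p w) + (z2 - z1) * (rho w + 7 * p w - 4 * dp w)" for w
  define I where "I = {-\<delta><..<\<delta>}"
  have oI: "open I" by (simp add: I_def)
  have f_fun: "f = (\<lambda>w. (w - z2) / (w - z1) * p w / Den w)" by (simp add: f_def Den_def phid_def fun_eq_iff)
  have fnz: "w \<in> I \<Longrightarrow> f w \<noteq> 0" for w using assms(5) by (simp add: f_def I_def)
  have wz1: "w \<in> I \<Longrightarrow> w \<noteq> z1" for w using fnz[of w] f_fun by auto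
  have wz2: "w \<in> I \<Longrightarrow> w \<noteq> z2" for w using fnz[of w] f_fun by auto
  have wz1': "w \<in> I \<Longrightarrow> w - z1 \<noteq> 0" for w using wz1 by auto
  have wz2': "w \<in> I \<Longrightarrow> w - z2 \<noteq> 0" for w using wz2 by auto
  have pnz: "w \<in> I \<Longrightarrow> p w \<noteq> 0" for w using fnz[of w] f_fun by auto
  have Dnz: "w \<in> I \<Longrightarrow> Den w \<noteq> 0" for w using fnz[of w] f_fun by auto
  define P1 where "P1 w = - (((w - z2) * (rho w + p w) + 4 * (z2 - z1) * dp w) / Den w) * p w / (w - z1)" for w
  have dP: "w \<in> I \<Longrightarrow> (p has_real_derivative P1 w) (at w)" for w
    using assms(7) by (simp add: I_def P1_def Den_def)
  have drho: "w \<in> I \<Longrightarrow> (rho has_real_derivative deriv rho w) (at w)" for w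
    using assms(3) DERIV_deriv_iff_real_differentiable by (auto simp: I_def)
  have ddp: "w \<in> I \<Longrightarrow> (dp has_real_derivative deriv dp w) (at w)" for w
    using assms(3) DERIV_deriv_iff_real_differentiable by (auto simp: I_def)
  have df: "w \<in> I \<Longrightarrow> (f has_real_derivative deriv f w) (at w)" for w
  proof -
    assume w: "w \<in> I"
    have "\<exists>D. (f has_real_derivative D) (at w)"
      unfolding f_fun Den_def
      using wz1[OF w] Dnz[OF w] drho[OF w] ddp[OF w] dP[OF w]
      by (intro exI) (auto intro!: derivative_eq_intros simp: Den_def)
    then show ?thesis using DERIV_imp_deriv by blast
  qed
  have cf: "continuous_on {-\<delta><..<\<delta>} f" using assms(4) by (simp add: f_def)
  have dphi: "w \<in> I \<Longrightarrow> ((\<lambda>z. phi rho p dp z1 z2 z) has_real_derivative f w) (at w)" for w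
    unfolding phi_def f_def[symmetric] using sint_deriv[OF cf, of w] assms(2) by (simp add: I_def)
  define g where "g w = f w / (w - z2)" for w
  have cg: "continuous_on {-\<delta><..<\<delta>} g" unfolding g_def
    by (intro continuous_intros cf) (use wz2 in \<open>auto simp: I_def\<close>)
  have dpsi: "w \<in> I \<Longrightarrow> ((\<lambda>z. sint 0 z g) has_real_derivative g w) (at w)" for w
    using sint_deriv[OF cg, of w] assms(2) by (simp add: I_def)
  have dgd: "w \<in> I \<Longrightarrow> (g has_real_derivative (deriv f w * (w - z2) - f w) / (w - z2)^2) (at w)" for w
    unfolding g_def using df[of w] wz2[of w]
    by (auto intro!: derivative_eq_intros simp: field_simps power2_eq_square)
  define A where "A w = exp (2 * phi rho p dp z1 z2 w)" for w
  define B where "B w = exp (4 * (z2 - z1) * sint 0 w g)" for w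
  define C where "C w = 4 * (z2 - z1) * (w - z1) / (w - z2)^2 * (f w)^2 / p w" for w
  define E :: "4 \<Rightarrow> real \<Rightarrow> real" where "E i w = (if i = 0 then A w else if i = 3 then - C w else - B w)" for i w
  have met: "the_metric rho p dp z1 z2 = (\<lambda>X. dg E (X $ 3))"
    unfolding the_metric_def dg_def E_def A_def B_def C_def g_def f_def Let_def
    by (auto simp: vec_eq_iff fun_eq_iff)
  have C_fun: "C = (\<lambda>w. 4 * (z2 - z1) * (w - z1) / (w - z2)^2 * (f w)^2 / p w)"
    by (rule ext) (simp add: C_def)
  have Cnz: "w \<in> I \<Longrightarrow> C w \<noteq> 0" for w
    using assms(1) wz1[of w] wz2[of w] fnz[of w] pnz[of w] by (simp add: C_def)
  have Enz: "w \<in> I \<Longrightarrow> E i w \<noteq> 0" for w i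
    using Cnz[of w] by (simp add: E_def A_def B_def)
  have dA: "w \<in> I \<Longrightarrow> (A has_real_derivative 2 * f w * A w) (at w)" for w
    unfolding A_def using dphi[of w] by (auto intro!: derivative_eq_intros)
  have dB: "w \<in> I \<Longrightarrow> (B has_real_derivative 4 * (z2 - z1) * g w * B w) (at w)" for w
    unfolding B_def using dpsi[of w] by (auto intro!: derivative_eq_intros)
  define C' where "C' w = C w * (1 / (w - z1) - 2 / (w - z2) + 2 * deriv f w / f w - P1 w / p w)" for w
  have dC: "w \<in> I \<Longrightarrow> (C has_real_derivative C' w) (at w)" for w
  proof -
    assume w: "w \<in> I"
    define u where "u = w - z1"
    define v where "v = w - z2"
    have z1u: "z1 = w - u" and z2v: "z2 = w - v" by (simp_all add: u_def v_def)
    have nz: "u \<noteq> 0" "v \<noteq> 0" using wz1'[OF w] wz2'[OF w] by (simp_all add: u_def v_def)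
    have "(C has_real_derivative C' w) (at w) \<longleftrightarrow>
      ((\<lambda>w. 4 * (z2 - z1) * (w - z1) / (w - z2)^2 * (f w)^2 / p w) has_real_derivative
        (4 * (z2 - z1) * (w - z1) / (w - z2)^2 * (f w)^2 / p w) * (1 / (w - z1) - 2 / (w - z2) + 2 * deriv f w / f w - P1 w / p w)) (at w)"
      unfolding C'_def C_fun by (simp only: C_def)
    also have "\<dots>"
      using df[OF w] dP[OF w] wz1'[OF w] wz2'[OF w] pnz[OF w] fnz[OF w]
      apply (auto intro!: derivative_eq_intros)
      apply (simp only: z1u z2v)
      using nz apply (simp add: field_simps)
      apply algebra
      done
    finally show ?thesis .
  qed
  have E0: "E 0 = A" by (rule ext) (simp add: E_def)
  have E1: "E 1 = (\<lambda>w. - B w)" by (rule ext) (simp add: E_def)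
  have E2: "E 2 = (\<lambda>w. - B w)" by (rule ext) (simp add: E_def)
  have E3: "E 3 = (\<lambda>w. - C w)" by (rule ext) (simp add: E_def)
  have dE0: "w \<in> I \<Longrightarrow> deriv (E 0) w = 2 * f w * A w" for w
    unfolding E0 by (rule DERIV_imp_deriv, rule dA)
  have dE1: "w \<in> I \<Longrightarrow> deriv (E 1) w = - (4 * (z2 - z1) * g w * B w)" for w
    unfolding E1 by (rule DERIV_imp_deriv) (auto intro!: derivative_eq_intros dB)
  have dE2: "w \<in> I \<Longrightarrow> deriv (E 2) w = - (4 * (z2 - z1) * g w * B w)" for w
    unfolding E2 by (rule DERIV_imp_deriv) (auto intro!: derivative_eq_intros dB)
  have dE3: "w \<in> I \<Longrightarrow> deriv (E 3) w = - C' w" for w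
    unfolding E3 by (rule DERIV_imp_deriv) (auto intro!: derivative_eq_intros dC)
  have Anz: "A w \<noteq> 0" "B w \<noteq> 0" for w by (simp_all add: A_def B_def)
  show ?thesis
  proof (intro exI[of _ \<delta>] conjI allI impI assms(2))
    fix X :: "real^4" and m n :: 4
    assume X: "\<bar>X $ 3\<bar> < \<delta>"
    define z where "z = X $ 3"
    have zI: "z \<in> I" using X by (auto simp: I_def z_def)
    have d300: "deriv (CF E 3 0 0) z = ((deriv f z * A z + f z * (2 * f z * A z)) * C z - f z * A z * C' z) / (C z)^2"
    proof (rule deriv_loc[OF oI zI])
      show "CF E 3 0 0 w = f w * A w / C w" if "w \<in> I" for w
        using that dE0[OF that] Cnz[OF that] by (simp add: CF_def E_def field_simps)
      show "((\<lambda>w. f w * A w / C w) has_real_derivative ((deriv f z * A z + f z * (2 * f z * A z)) * C z - f z * A z * C' z) / (C z)^2) (at z)"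
        using df[OF zI] dA[OF zI] dC[OF zI] Cnz[OF zI] by (auto intro!: derivative_eq_intros simp: power2_eq_square)
    qed
    have d311: "deriv (CF E 3 1 1) z = - (2 * (z2 - z1)) * (((deriv f z * (z - z2) - f z) / (z - z2)^2 * B z + g z * (4 * (z2 - z1) * g z * B z)) * C z - g z * B z * C' z) / (C z)^2"
    proof (rule deriv_loc[OF oI zI])
      show "CF E 3 1 1 w = - (2 * (z2 - z1)) * (g w * B w / C w)" if "w \<in> I" for w
        using that dE1[OF that] Cnz[OF that] by (simp add: CF_def E_def field_simps)
      show "((\<lambda>w. - (2 * (z2 - z1)) * (g w * B w / C w)) has_real_derivative - (2 * (z2 - z1)) * (((deriv f z * (z - z2) - f z) / (z - z2)^2 * B z + g z * (4 * (z2 - z1) * g z * B z)) * C z - g z * B z * C' z) / (C z)^2) (at z)"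
        using dgd[OF zI] dB[OF zI] dC[OF zI] Cnz[OF zI] wz2'[OF zI] apply (auto intro!: derivative_eq_intros simp: field_simps)
        by algebra
    qed
    have d322: "deriv (CF E 3 2 2) z = - (2 * (z2 - z1)) * (((deriv f z * (z - z2) - f z) / (z - z2)^2 * B z + g z * (4 * (z2 - z1) * g z * B z)) * C z - g z * B z * C' z) / (C z)^2"
    proof (rule deriv_loc[OF oI zI])
      show "CF E 3 2 2 w = - (2 * (z2 - z1)) * (g w * B w / C w)" if "w \<in> I" for w
        using that dE2[OF that] Cnz[OF that] by (simp add: CF_def E_def field_simps)
      show "((\<lambda>w. - (2 * (z2 - z1)) * (g w * B w / C w)) has_real_derivative - (2 * (z2 - z1)) * (((deriv f z * (z - z2) - f z) / (z - z2)^2 * B z + g z * (4 * (z2 - z1) * g z * B z)) * C z - g z * B z * C' z) / (C z)^2) (at z)"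
        using dgd[OF zI] dB[OF zI] dC[OF zI] Cnz[OF zI] wz2'[OF zI] apply (auto intro!: derivative_eq_intros simp: field_simps)
        by algebra
    qed
    have d030: "deriv (CF E 0 3 0) z = deriv f z"
    proof (rule deriv_loc[OF oI zI])
      show "CF E 0 3 0 w = f w" if "w \<in> I" for w
        using that dE0[OF that] Anz[of w] by (simp add: CF_def E_def field_simps)
    qed (rule df[OF zI])
    have d131: "deriv (CF E 1 3 1) z = 2 * (z2 - z1) * ((deriv f z * (z - z2) - f z) / (z - z2)^2)"
    proof (rule deriv_loc[OF oI zI])
      show "CF E 1 3 1 w = 2 * (z2 - z1) * g w" if "w \<in> I" for w
        using that dE1[OF that] Anz[of w] by (simp add: CF_def E_def field_simps)
    qed (auto intro!: derivative_eq_intros dgd[OF zI])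
    have d232: "deriv (CF E 2 3 2) z = 2 * (z2 - z1) * ((deriv f z * (z - z2) - f z) / (z - z2)^2)"
    proof (rule deriv_loc[OF oI zI])
      show "CF E 2 3 2 w = 2 * (z2 - z1) * g w" if "w \<in> I" for w
        using that dE2[OF that] Anz[of w] by (simp add: CF_def E_def field_simps)
    qed (auto intro!: derivative_eq_intros dgd[OF zI])
    have EM: "einstein_mixed (the_metric rho p dp z1 z2) m n X = EMz E m n z"
      by (simp add: met einstein_red z_def)
    also have "\<dots> = (1 / E m z) * RF E m n z - (1/2) * (\<Sum>k\<in>UNIV. (1 / E k z) * RF E k k z) * (if m = n then 1 else 0)"
      by (rule EMz_loc[OF oI zI Enz])
    finally have EM2: "einstein_mixed (the_metric rho p dp z1 z2) m n X = \<dots>" .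
    have emt: "the_emt rho p dp X $ m $ n = (if m \<noteq> n then 0 else if m = 0 then rho z else if m = 3 then - p z else - (p z - dp z))"
      by (simp add: the_emt_def z_def Let_def)
    define u where "u = z - z1"
    define v where "v = z - z2"
    have z1u: "z1 = z - u" and z2v: "z2 = z - v" by (simp_all add: u_def v_def)
    have nzs: "u \<noteq> 0" "v \<noteq> 0" "p z \<noteq> 0" "f z \<noteq> 0" "A z \<noteq> 0" "B z \<noteq> 0"
      using wz1'[OF zI] wz2'[OF zI] pnz[OF zI] fnz[OF zI] Anz by (simp_all add: u_def v_def)
    have P1z: "P1 z = - f z * (rho z + p z + 4 * (z2 - z1) * dp z / (z - z2))"
      using Dnz[OF zI] nzs unfolding P1_def f_fun z1u z2v
      by (simp add: field_simps)
    interpret ac: algctx "C z" "C' z" "f z" "deriv f z" "g z" "p z" "P1 z" "rho z" "dp z" "z - z1" "z - z2" "z2 - z1"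
    proof
      show "z - z1 \<noteq> 0" "z - z2 \<noteq> 0" "p z \<noteq> 0" "f z \<noteq> 0" using nzs by (simp_all add: u_def v_def)
      show "z2 - z1 \<noteq> 0" using assms(1) by simp
      show "g z = f z / (z - z2)" by (simp add: g_def)
      show "z - z1 = z - z2 + (z2 - z1)" by simp
      show "C z = 4 * (z2 - z1) * (z - z1) / (z - z2)\<^sup>2 * (f z)\<^sup>2 / p z" by (simp add: C_def)
      show "C' z = C z * (1 / (z - z1) - 2 / (z - z2) + 2 * deriv f z / f z - P1 z / p z)" by (simp add: C'_def)
      show "P1 z = - f z * (rho z + p z + 4 * (z2 - z1) * dp z / (z - z2))" by (rule P1z)
      show "(z - z2) * p z = (z - z1) * f z * ((z - z1) * (rho z - p z) + (z2 - z1) * (rho z + 7 * p z - 4 * dp z))"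
        using Dnz[OF zI] nzs unfolding f_fun Den_def[symmetric] by (simp add: field_simps u_def v_def)
    qed
    have m4: "m = 0 \<or> m = 1 \<or> m = 2 \<or> m = 3" and n4: "n = 0 \<or> n = 1 \<or> n = 2 \<or> n = 3"
      using exhaust_4[of m] exhaust_4[of n] by auto
    note simps = RF_def sum4 CF_zero d300 d311 d322 d030 d131 d232 CF_def dE0[OF zI] dE1[OF zI] dE2[OF zI] dE3[OF zI] E_def
    show "einstein_mixed (the_metric rho p dp z1 z2) m n X = the_emt rho p dp X $ m $ n"
      unfolding EM2 emt using m4 n4
      apply (elim disjE)
      apply (simp_all add: simps Anz)
      subgoal by (rule trans[OF stepA0[where a="A z" and b="B z" and c="C z" and cp="C' z" and f="f z" and fa="deriv f z" and g="g z" and z=z and za=z1 and zb=z2 and v="z - z2" and w="z2 - z1"] ac.B0]) (use nzs Cnz[OF zI] in \<open>simp_all add: v_def\<close>)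
      subgoal by (rule trans[OF stepA1[where a="A z" and b="B z" and c="C z" and cp="C' z" and f="f z" and fa="deriv f z" and g="g z" and z=z and za=z1 and zb=z2 and v="z - z2" and w="z2 - z1"] ac.B1]) (use nzs Cnz[OF zI] in \<open>simp_all add: v_def\<close>)
      subgoal by (rule trans[OF stepA2[where a="A z" and b="B z" and c="C z" and cp="C' z" and f="f z" and fa="deriv f z" and g="g z" and z=z and za=z1 and zb=z2 and v="z - z2" and w="z2 - z1"] ac.B1]) (use nzs Cnz[OF zI] in \<open>simp_all add: v_def\<close>)
      subgoal by (rule trans[OF stepA3[where a="A z" and b="B z" and c="C z" and cp="C' z" and f="f z" and fa="deriv f z" and g="g z" and z=z and za=z1 and zb=z2 and v="z - z2" and w="z2 - z1"] ac.B2]) (use nzs Cnz[OF zI] in \<open>simp_all add: v_def\<close>)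
      done
  qed
qed

end
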